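(* For any learning algorithm $\mathcal{A}$ (and any subpopulations $\mathcal{D}_1,\dots,\mathcal{D}_K$, loss $\ell$ and $N\ge1$), one of the following two scenarios must hold: (1) $L^{\mathrm{same}}({\bm{p}})=L^*_N({\bm{p}})$ holds only for a (Lebesgue) measure-zero subset of ${\bm{p}}\in\Delta_K$; (2) $\nabla L^{\mathrm{same}}({\bm{p}})=(f_1({\bm{p}}),\dots,f_K({\bm{p}}))$ (for all ${\bm{p}}\in\mathbb{R}^K_{\ge0}\setminus\{\mathbf{0}\}$).
   Context: Setting: distributions $\mathcal{D}_1,\dots,\mathcal{D}_K$ on $\mathcal{Z}$, a loss $\ell(h,{\bm{z}})$ (all expectations finite), $N\ge1$, a learning algorithm $\mathcal{A}:\mathcal{Z}^N\to\mathcal{H}$. For ${\bm{r}}\in\Delta_K=\{{\bm{r}}\ge0:\sum_kr_k=1\}$, $\bar e_k({\bm{r}})=\mathbb{E}_{S\sim(\sum_jr_j\mathcal{D}_j)^N}\mathbb{E}_{{\bm{z}}\sim\mathcal{D}_k}[\ell(\mathcal{A}(S),{\bm{z}})]$; $f_k({\bm{r}})=\bar e_k({\bm{r}}/|{\bm{r}}|)$ on $\mathbb{R}^K_{\ge0}\setminus\{\mathbf{0}\}$ with $|{\bm{r}}|=\sum_jr_j$; $L_N({\bm{p}},{\bm{r}})=\sum_kp_kf_k({\bm{r}})$; $L^{\mathrm{same}}({\bm{p}})=\sum_kp_kf_k({\bm{p}})$; $L^*_N({\bm{p}})=\min_{{\bm{r}}\in\Delta_K}L_N({\bm{p}},{\bm{r}})$.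 *)

theory Defs
  imports "HOL-Probability.Probability"
begin

definition prob_simplex :: "(real^'k::finite) set" where
  "prob_simplex = {r. (\<forall>k. 0 \<le> r$k) \<and> (\<Sum>k\<in>UNIV. r$k) = 1}"

definition orthant_nz :: "(real^'k::finite) set" where
  "orthant_nz = {r. \<forall>k. 0 \<le> r$k} - {0}"

definition mixture :: "'z measure \<Rightarrow> ('k::finite \<Rightarrow> 'z measure) \<Rightarrow> real^'k \<Rightarrow> 'z measure" where
  "mixture M D r = measure_of (space M) (sets M)
     (\<lambda>X. \<Sum>k\<in>UNIV. ennreal (r$k) * emeasure (D k) X)"

definition exp_err :: "'z measure \<Rightarrow> ('k::finite \<Rightarrow> 'z measure) \<Rightarrow> ('h \<Rightarrow> 'z \<Rightarrow> real)
    \<Rightarrow> ((nat \<Rightarrow> 'z) \<Rightarrow> 'h) \<Rightarrow> nat \<Rightarrow> real^'k \<Rightarrow> 'k \<Rightarrow> real" where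
  "exp_err M D loss A N r k =
     (\<integral>S. (\<integral>z. loss (A S) z \<partial>(D k)) \<partial>(PiM {..<N} (\<lambda>_. mixture M D r)))"

definition ferr :: "'z measure \<Rightarrow> ('k::finite \<Rightarrow> 'z measure) \<Rightarrow> ('h \<Rightarrow> 'z \<Rightarrow> real)
    \<Rightarrow> ((nat \<Rightarrow> 'z) \<Rightarrow> 'h) \<Rightarrow> nat \<Rightarrow> real^'k \<Rightarrow> 'k \<Rightarrow> real" where
  "ferr M D loss A N r k = exp_err M D loss A N ((1 / (\<Sum>j\<in>UNIV. r$j)) *\<^sub>R r) k"

definition LN :: "'z measure \<Rightarrow> ('k::finite \<Rightarrow> 'z measure) \<Rightarrow> ('h \<Rightarrow> 'z \<Rightarrow> real)
    \<Rightarrow> ((nat \<Rightarrow> 'z) \<Rightarrow> 'h) \<Rightarrow> nat \<Rightarrow> real^'k \<Rightarrow> real^'k \<Rightarrow> real" where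
  "LN M D loss A N p r = (\<Sum>k\<in>UNIV. p$k * ferr M D loss A N r k)"

definition Lsame :: "'z measure \<Rightarrow> ('k::finite \<Rightarrow> 'z measure) \<Rightarrow> ('h \<Rightarrow> 'z \<Rightarrow> real)
    \<Rightarrow> ((nat \<Rightarrow> 'z) \<Rightarrow> 'h) \<Rightarrow> nat \<Rightarrow> real^'k \<Rightarrow> real" where
  "Lsame M D loss A N p = (\<Sum>k\<in>UNIV. p$k * ferr M D loss A N p k)"

definition Lstar :: "'z measure \<Rightarrow> ('k::finite \<Rightarrow> 'z measure) \<Rightarrow> ('h \<Rightarrow> 'z \<Rightarrow> real)
    \<Rightarrow> ((nat \<Rightarrow> 'z) \<Rightarrow> 'h) \<Rightarrow> nat \<Rightarrow> real^'k \<Rightarrow> real" where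
  "Lstar M D loss A N p = (INF r\<in>prob_simplex. LN M D loss A N p r)"

text \<open>A subset of the simplex has (K-1)-dimensional Lebesgue measure zero: its image under
  dropping one coordinate k0 is contained in a Lebesgue null set of R^(K-1).
  (Independent of the choice of k0; we require it for every k0.)\<close>

definition simplex_null :: "(real^'k::finite) set \<Rightarrow> bool" where
  "simplex_null S \<longleftrightarrow> (\<forall>k0. \<exists>Z \<in> null_sets (PiM (UNIV - {k0}) (\<lambda>_. lborel)).
      (\<lambda>p. restrict (\<lambda>i. p$i) (UNIV - {k0})) ` S \<subseteq> Z)"

end

theory Submission
  imports Defs "HOL-Computational_Algebra.Polynomial"
begin

lemma mixture_sets:
  "sets (mixture M D r) = sets M"
  unfolding mixture_def using sets.space_closed[of M] by (simp add: sets_measure_of_conv sets.sigma_sets_eq)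

lemma mixture_space: "space (mixture M D r) = space M"
  unfolding mixture_def by (simp add: space_measure_of_conv)

lemma mixture_emeasure:
  fixes r :: "real^'k::finite"
  assumes D: "\<forall>k. sets (D k) = sets M" and X: "X \<in> sets M"
  shows "emeasure (mixture M D r) X = (\<Sum>k\<in>UNIV. ennreal (r$k) * emeasure (D k) X)"
  unfolding mixture_def
proof (rule emeasure_measure_of_sigma[OF sets.sigma_algebra_axioms _ _ X])
  show "positive (sets M) (\<lambda>X. \<Sum>k\<in>UNIV. ennreal (r $ k) * emeasure (D k) X)"
    by (simp add: positive_def)
  show "countably_additive (sets M) (\<lambda>X. \<Sum>k\<in>UNIV. ennreal (r $ k) * emeasure (D k) X)"
    unfolding countably_additive_def
  proof (intro allI impI)
    fix A :: "nat \<Rightarrow> _" assume A: "range A \<subseteq> sets M" "disjoint_family A" "\<Union> (range A) \<in> sets M"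
    have "(\<Sum>i. \<Sum>k\<in>UNIV. ennreal (r $ k) * emeasure (D k) (A i)) =
        (\<Sum>k\<in>UNIV. \<Sum>i. ennreal (r $ k) * emeasure (D k) (A i))"
      by (rule suminf_sum) (rule summableI)
    also have "\<dots> = (\<Sum>k\<in>UNIV. ennreal (r $ k) * emeasure (D k) (\<Union> (range A)))"
      using A D by (simp add: suminf_emeasure)
    finally show "(\<Sum>i. \<Sum>k\<in>UNIV. ennreal (r $ k) * emeasure (D k) (A i)) =
        (\<Sum>k\<in>UNIV. ennreal (r $ k) * emeasure (D k) (\<Union> (range A)))" .
  qed
qed

lemma mixture_nn_integral:
  fixes r :: "real^'k::finite"
  assumes D: "\<forall>k. sets (D k) = sets M" and f: "f \<in> borel_measurable M"
  shows "(\<integral>\<^sup>+x. f x \<partial>mixture M D r) = (\<Sum>k\<in>UNIV. ennreal (r$k) * (\<integral>\<^sup>+x. f x \<partial>D k))"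
  using f
proof induction
  case (cong f g)
  have sp: "space (D k) = space M" for k using D sets_eq_imp_space_eq by blast
  show ?case
    using cong by (simp add: sp mixture_space cong: nn_integral_cong_simp)
next
  case (set A)
  then show ?case using D by (simp add: mixture_emeasure mixture_sets)
next
  case (mult u c)
  have m: "u \<in> borel_measurable (mixture M D r)" "\<And>k. u \<in> borel_measurable (D k)"
    using mult D by (auto simp: mixture_sets cong: measurable_cong_sets)
  show ?case using mult m
    by (simp add: nn_integral_cmult sum_distrib_left mult.assoc mult.left_commute)
next
  case (add u v)
  have m: "u \<in> borel_measurable (mixture M D r)" "\<And>k. u \<in> borel_measurable (D k)"
     "v \<in> borel_measurable (mixture M D r)" "\<And>k. v \<in> borel_measurable (D k)"
    using add D by (auto simp: mixture_sets cong: measurable_cong_sets)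
  show ?case using add m
    by (simp add: nn_integral_add distrib_left sum.distrib)
next
  case (seq U)
  have m: "\<And>i. U i \<in> borel_measurable (mixture M D r)" "\<And>i k. U i \<in> borel_measurable (D k)"
    using seq D by (auto simp: mixture_sets cong: measurable_cong_sets)
  have inc: "\<And>k. incseq (\<lambda>i. ennreal (r $ k) * integral\<^sup>N (D k) (U i))"
    using seq m by (auto simp: incseq_def le_fun_def intro!: mult_left_mono nn_integral_mono)
  show ?case using seq m
    apply (simp add: nn_integral_monotone_convergence_SUP SUP_mult_left_ennreal image_comp)
    apply (subst ennreal_SUP_sum[OF inc, symmetric])
    apply (simp add: SUP_mult_left_ennreal)
    done
qed

lemma mixture_prob:
  fixes r :: "real^'k::finite"
  assumes D: "\<forall>k. sets (D k) = sets M" "\<forall>k. prob_space (D k)"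
    and r: "\<forall>k. 0 \<le> r$k" "(\<Sum>k\<in>UNIV. r$k) = 1"
  shows "prob_space (mixture M D r)"
proof (rule prob_spaceI)
  have sp: "space (D k) = space M" for k using D sets_eq_imp_space_eq by blast
  have "emeasure (mixture M D r) (space M) = (\<Sum>k\<in>UNIV. ennreal (r$k))"
  proof -
    have "emeasure (D k) (space M) = 1" for k using D(2) sp prob_space.emeasure_space_1 by metis
    then show ?thesis using D by (simp add: mixture_emeasure)
  qed
  also have "\<dots> = 1" using r by simp
  finally show "emeasure (mixture M D r) (space (mixture M D r)) = 1"
    by (simp add: mixture_space)
qed

lemma PiE_Suc_sum:
  fixes X :: "(nat \<Rightarrow> 'k::finite) \<Rightarrow> ennreal"
  shows "(\<Sum>s\<in>PiE {..<Suc n} (\<lambda>_. UNIV). X s) = (\<Sum>k\<in>UNIV. \<Sum>s\<in>PiE {..<n} (\<lambda>_. UNIV). X (s(n:=k)))"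
proof -
  have eq: "PiE {..<Suc n} (\<lambda>_. UNIV::'k set) = (\<lambda>(y, g). g(n := y)) ` (UNIV \<times> PiE {..<n} (\<lambda>_. UNIV))"
    by (simp add: lessThan_Suc PiE_insert_eq)
  have inj: "inj_on (\<lambda>(y, g). g(n := y)) (UNIV \<times> PiE {..<n} (\<lambda>_. UNIV::'k set))"
  proof (rule inj_onI, clarsimp)
    fix a b :: 'k and s t :: "nat \<Rightarrow> 'k"
    assume s: "s \<in> PiE {..<n} (\<lambda>_. UNIV)" and t: "t \<in> PiE {..<n} (\<lambda>_. UNIV)" and e: "s(n := a) = t(n := b)"
    have "a = b" using fun_cong[OF e, of n] by simp
    moreover have "s = t"
    proof
      fix i show "s i = t i"
        using fun_cong[OF e, of i] s t by (cases "i = n") (auto simp: PiE_def extensional_def)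
    qed
    ultimately show "a = b \<and> s = t" by simp
  qed
  show ?thesis unfolding eq
    by (subst sum.reindex[OF inj]) (simp add: sum.cartesian_product split_def)
qed

lemma meas_transfer: "f \<in> measurable A B \<Longrightarrow> sets A = sets A' \<Longrightarrow> f \<in> measurable A' B"
  using measurable_cong_sets by blast

lemma expand_nn:
  fixes r :: "real^'k::finite" and n :: nat
  assumes D: "\<forall>k. sets (D k) = sets M" "\<forall>k. prob_space (D k)"
    and r: "\<forall>k. 0 \<le> r$k" "(\<Sum>k\<in>UNIV. r$k) = 1"
  shows "g \<in> borel_measurable (PiM {..<n} (\<lambda>_. M)) \<Longrightarrow>
    (\<integral>\<^sup>+x. g x \<partial>PiM {..<n} (\<lambda>_. mixture M D r)) =
    (\<Sum>s\<in>PiE {..<n} (\<lambda>_. UNIV). ennreal (\<Prod>i<n. r$(s i)) * (\<integral>\<^sup>+x. g x \<partial>PiM {..<n} (\<lambda>i. D (s i))))"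
proof (induction n arbitrary: g)
  case 0
  then show ?case by (simp add: PiM_empty)
next
  case (Suc n)
  let ?Mx = "mixture M D r"
  have mp: "prob_space ?Mx" using mixture_prob[OF D r] .
  have sp: "space (D k) = space M" for k using D sets_eq_imp_space_eq by blast
  interpret Px: product_sigma_finite "\<lambda>_. ?Mx"
    by (simp add: product_sigma_finite_def prob_space_imp_sigma_finite mp)
  have ins: "{..<Suc n} = insert n {..<n}" by auto
  have gM: "g \<in> borel_measurable (PiM (insert n {..<n}) (\<lambda>_. M))" using Suc.prems ins by simp
  have gx: "g \<in> borel_measurable (PiM (insert n {..<n}) (\<lambda>_. ?Mx))"
    by (rule meas_transfer[OF gM], rule sets_PiM_cong) (auto simp: mixture_sets)
  have upd: "(\<lambda>y. g (x(n:=y))) \<in> borel_measurable M" if x: "x \<in> space (PiM {..<n} (\<lambda>_. M))" for x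
    using measurable_comp[OF measurable_component_update[OF x, of n] gM] by (simp add: o_def)
  define h where "h k x = (\<integral>\<^sup>+y. g (x(n:=y)) \<partial>D k)" for k x
  have pm: "(\<lambda>(x, y). g (x(n:=y))) \<in> borel_measurable (PiM {..<n} (\<lambda>_. M) \<Otimes>\<^sub>M D k)" for k
  proof -
    have "(\<lambda>(x, y). g (x(n:=y))) \<in> borel_measurable (PiM {..<n} (\<lambda>_. M) \<Otimes>\<^sub>M M)"
      using measurable_comp[OF measurable_add_dim[of n "{..<n}" "\<lambda>_. M"] gM]
      by (simp add: o_def case_prod_beta')
    then show ?thesis
      by (rule meas_transfer, intro sets_pair_measure_cong) (auto simp: D)
  qed
  have hm: "h k \<in> borel_measurable (PiM {..<n} (\<lambda>_. M))" for k
    unfolding h_def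
    using sigma_finite_measure.borel_measurable_nn_integral[of "D k" "\<lambda>x y. g (x(n:=y))", OF _ pm]
      D prob_space_imp_sigma_finite by blast
  have hmx: "h k \<in> borel_measurable (PiM {..<n} (\<lambda>_. ?Mx))" for k
    by (rule meas_transfer[OF hm[of k]], rule sets_PiM_cong) (auto simp: mixture_sets)
  have step5: "(\<integral>\<^sup>+x. h k x \<partial>PiM {..<n} (\<lambda>i. D (s i))) =
      (\<integral>\<^sup>+x. g x \<partial>PiM (insert n {..<n}) (\<lambda>i. D ((s(n:=k)) i)))" for s k
  proof -
    interpret Ps: product_sigma_finite "\<lambda>i. D ((s(n:=k)) i)"
      using D by (simp add: product_sigma_finite_def prob_space_imp_sigma_finite)
    have gs: "g \<in> borel_measurable (PiM (insert n {..<n}) (\<lambda>i. D ((s(n:=k)) i)))"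
      by (rule meas_transfer[OF gM], rule sets_PiM_cong) (auto simp: D)
    have "PiM {..<n} (\<lambda>i. D ((s(n:=k)) i)) = PiM {..<n} (\<lambda>i. D (s i))"
      by (rule PiM_cong) auto
    then show ?thesis
      using Ps.product_nn_integral_insert[OF _ _ gs] by (simp add: h_def)
  qed
  have "(\<integral>\<^sup>+x. g x \<partial>PiM {..<Suc n} (\<lambda>_. ?Mx)) =
      (\<integral>\<^sup>+x. (\<integral>\<^sup>+y. g (x(n:=y)) \<partial>?Mx) \<partial>PiM {..<n} (\<lambda>_. ?Mx))"
    unfolding ins using Px.product_nn_integral_insert[OF _ _ gx] by simp
  also have "\<dots> = (\<integral>\<^sup>+x. (\<Sum>k\<in>UNIV. ennreal (r$k) * h k x) \<partial>PiM {..<n} (\<lambda>_. ?Mx))"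
  proof (rule nn_integral_cong)
    fix x assume "x \<in> space (PiM {..<n} (\<lambda>_. ?Mx))"
    then have "x \<in> space (PiM {..<n} (\<lambda>_. M))" by (simp add: space_PiM mixture_space)
    then show "(\<integral>\<^sup>+y. g (x(n:=y)) \<partial>?Mx) = (\<Sum>k\<in>UNIV. ennreal (r$k) * h k x)"
      using mixture_nn_integral[OF D(1) upd] by (simp add: h_def)
  qed
  also have "\<dots> = (\<Sum>k\<in>UNIV. ennreal (r$k) * (\<integral>\<^sup>+x. h k x \<partial>PiM {..<n} (\<lambda>_. ?Mx)))"
    using hmx by (simp add: nn_integral_sum nn_integral_cmult)
  also have "\<dots> = (\<Sum>k\<in>UNIV. ennreal (r$k) * (\<Sum>s\<in>PiE {..<n} (\<lambda>_. UNIV).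
       ennreal (\<Prod>i<n. r$(s i)) * (\<integral>\<^sup>+x. g x \<partial>PiM (insert n {..<n}) (\<lambda>i. D ((s(n:=k)) i)))))"
    using Suc.IH[OF hm] by (simp add: step5)
  also have "\<dots> = (\<Sum>k\<in>UNIV. \<Sum>s\<in>PiE {..<n} (\<lambda>_. UNIV).
       ennreal (\<Prod>i<Suc n. r$((s(n:=k)) i)) * (\<integral>\<^sup>+x. g x \<partial>PiM {..<Suc n} (\<lambda>i. D ((s(n:=k)) i))))"
  proof (rule sum.cong[OF refl], rule trans[OF sum_distrib_left], rule sum.cong[OF refl])
    fix k s
    have "(\<Prod>i<Suc n. r$((s(n:=k)) i)) = r$k * (\<Prod>i<n. r$(s i))"
    proof -
      have "(\<Prod>i<n. r$((s(n:=k)) i)) = (\<Prod>i<n. r$(s i))" by (rule prod.cong) auto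
      then show ?thesis by (simp add: lessThan_Suc)
    qed
    moreover have "0 \<le> (\<Prod>i<n. r$(s i))" using r by (simp add: prod_nonneg)
    ultimately show "ennreal (r$k) * (ennreal (\<Prod>i<n. r$(s i)) * (\<integral>\<^sup>+x. g x \<partial>PiM (insert n {..<n}) (\<lambda>i. D ((s(n:=k)) i)))) =
       ennreal (\<Prod>i<Suc n. r$((s(n:=k)) i)) * (\<integral>\<^sup>+x. g x \<partial>PiM {..<Suc n} (\<lambda>i. D ((s(n:=k)) i)))"
      using r by (simp add: ins ennreal_mult mult.assoc)
  qed
  also have "\<dots> = (\<Sum>s\<in>PiE {..<Suc n} (\<lambda>_. UNIV). ennreal (\<Prod>i<Suc n. r$(s i)) * (\<integral>\<^sup>+x. g x \<partial>PiM {..<Suc n} (\<lambda>i. D (s i))))"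
    by (rule PiE_Suc_sum[symmetric])
  finally show ?case .
qed

definition SS :: "nat \<Rightarrow> (nat \<Rightarrow> 'k::finite) set" where
  "SS n = PiE {..<n} (\<lambda>_. UNIV)"

lemma finite_SS[simp]: "finite (SS n)"
  unfolding SS_def by (simp add: finite_PiE)

lemma unif_simplex: "(\<chi> _. 1 / real CARD('k)) \<in> (prob_simplex :: (real^'k::finite) set)"
  unfolding prob_simplex_def by simp

context
  fixes M :: "'z measure" and D :: "'k::finite \<Rightarrow> 'z measure"
    and loss :: "'h \<Rightarrow> 'z \<Rightarrow> real" and A :: "(nat \<Rightarrow> 'z) \<Rightarrow> 'h" and N :: nat
  assumes Dp: "\<forall>k. prob_space (D k)"
    and Ds: "\<forall>k. sets (D k) = sets M"
    and Int: "\<forall>r\<in>prob_simplex. \<forall>k. integrable (PiM {..<N} (\<lambda>_. mixture M D r) \<Otimes>\<^sub>M D k)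
                                  (\<lambda>(S, z). loss (A S) z)"
begin

definition phi :: "'k \<Rightarrow> (nat \<Rightarrow> 'z) \<Rightarrow> real" where
  "phi k S = (\<integral>z. loss (A S) z \<partial>D k)"

definition Ipos :: "(nat \<Rightarrow> 'k) \<Rightarrow> 'k \<Rightarrow> ennreal" where
  "Ipos s k = (\<integral>\<^sup>+S. ennreal (phi k S) \<partial>PiM {..<N} (\<lambda>i. D (s i)))"

definition Ineg :: "(nat \<Rightarrow> 'k) \<Rightarrow> 'k \<Rightarrow> ennreal" where
  "Ineg s k = (\<integral>\<^sup>+S. ennreal (- phi k S) \<partial>PiM {..<N} (\<lambda>i. D (s i)))"

definition coef :: "(nat \<Rightarrow> 'k) \<Rightarrow> 'k \<Rightarrow> real" where
  "coef s k = enn2real (Ipos s k) - enn2real (Ineg s k)"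

lemma simplexD: "r \<in> prob_simplex \<Longrightarrow> (\<forall>k. 0 \<le> r$k) \<and> (\<Sum>k\<in>UNIV. r$k) = 1"
  unfolding prob_simplex_def by simp

lemma int_phi: 
  assumes r: "r \<in> prob_simplex"
  shows "integrable (PiM {..<N} (\<lambda>_. mixture M D r)) (phi k)"
proof -
  have pm: "prob_space (PiM {..<N} (\<lambda>_. mixture M D r))"
    using mixture_prob[OF Ds Dp] simplexD[OF r] by (intro prob_space_PiM) auto
  interpret pair_sigma_finite "PiM {..<N} (\<lambda>_. mixture M D r)" "D k"
    using pm Dp by (simp add: pair_sigma_finite_def prob_space_imp_sigma_finite)
  show ?thesis
    using integrable_fst'[OF Int[rule_format, OF r, of k]] by (simp add: phi_def[abs_def])
qed

lemma meas_phi: "phi k \<in> borel_measurable (PiM {..<N} (\<lambda>_. M))"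
proof -
  have "phi k \<in> borel_measurable (PiM {..<N} (\<lambda>_. mixture M D (\<chi> _. 1 / real CARD('k))))"
    using int_phi[OF unif_simplex] by blast
  then show ?thesis
    by (rule meas_transfer, intro sets_PiM_cong) (auto simp: mixture_sets)
qed

lemma fin_I: "s \<in> SS N \<Longrightarrow> Ipos s k < top \<and> Ineg s k < top"
proof -
  assume s: "s \<in> SS N"
  define u where "u = (\<chi> _. 1 / real CARD('k) :: real^'k)"
  have u: "u \<in> prob_simplex" unfolding u_def by (rule unif_simplex)
  note ur = simplexD[OF u, THEN conjunct1] simplexD[OF u, THEN conjunct2]
  have i: "integrable (PiM {..<N} (\<lambda>_. mixture M D u)) (phi k)" using int_phi[OF u] .
  have mp: "(\<lambda>S. ennreal (phi k S)) \<in> borel_measurable (PiM {..<N} (\<lambda>_. M))"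
     "(\<lambda>S. ennreal (- phi k S)) \<in> borel_measurable (PiM {..<N} (\<lambda>_. M))"
    using meas_phi by auto
  have pos: "0 < (\<Prod>i<N. u$(s i))" unfolding u_def by simp
  have "(\<Sum>s\<in>SS N. ennreal (\<Prod>i<N. u$(s i)) * Ipos s k) \<noteq> top"
    using expand_nn[OF Ds Dp ur mp(1)] integrableD(2)[OF i] by (simp add: Ipos_def SS_def)
  then have a: "ennreal (\<Prod>i<N. u$(s i)) * Ipos s k \<noteq> top" using s by simp
  have "(\<Sum>s\<in>SS N. ennreal (\<Prod>i<N. u$(s i)) * Ineg s k) \<noteq> top"
    using expand_nn[OF Ds Dp ur mp(2)] integrableD(3)[OF i] by (simp add: Ineg_def SS_def)
  then have b: "ennreal (\<Prod>i<N. u$(s i)) * Ineg s k \<noteq> top" using s by simp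
  show ?thesis using a b pos by (auto simp: ennreal_mult_eq_top_iff top.not_eq_extremum u_def)
qed

lemma exp_err_poly:
  assumes r: "r \<in> prob_simplex"
  shows "exp_err M D loss A N r k = (\<Sum>s\<in>SS N. (\<Prod>i<N. r$(s i)) * coef s k)"
proof -
  note rr = simplexD[OF r, THEN conjunct1] simplexD[OF r, THEN conjunct2]
  have i: "integrable (PiM {..<N} (\<lambda>_. mixture M D r)) (phi k)" using int_phi[OF r] .
  have mp: "(\<lambda>S. ennreal (phi k S)) \<in> borel_measurable (PiM {..<N} (\<lambda>_. M))"
     "(\<lambda>S. ennreal (- phi k S)) \<in> borel_measurable (PiM {..<N} (\<lambda>_. M))"
    using meas_phi by auto
  have pr: "0 \<le> (\<Prod>i<N. r$(s i))" for s using rr by (simp add: prod_nonneg)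
  have e1: "enn2real (\<Sum>s\<in>SS N. ennreal (\<Prod>i<N. r$(s i)) * Ipos s k) = (\<Sum>s\<in>SS N. (\<Prod>i<N. r$(s i)) * enn2real (Ipos s k))"
    using fin_I pr by (subst enn2real_sum) (auto simp: ennreal_mult_less_top enn2real_mult)
  have e2: "enn2real (\<Sum>s\<in>SS N. ennreal (\<Prod>i<N. r$(s i)) * Ineg s k) = (\<Sum>s\<in>SS N. (\<Prod>i<N. r$(s i)) * enn2real (Ineg s k))"
    using fin_I pr by (subst enn2real_sum) (auto simp: ennreal_mult_less_top enn2real_mult)
  have "exp_err M D loss A N r k = integral\<^sup>L (PiM {..<N} (\<lambda>_. mixture M D r)) (phi k)"
    by (simp add: exp_err_def phi_def[abs_def])
  also have "\<dots> = enn2real (\<Sum>s\<in>SS N. ennreal (\<Prod>i<N. r$(s i)) * Ipos s k)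
                 - enn2real (\<Sum>s\<in>SS N. ennreal (\<Prod>i<N. r$(s i)) * Ineg s k)"
    unfolding real_lebesgue_integral_def[OF i] expand_nn[OF Ds Dp rr mp(1)] expand_nn[OF Ds Dp rr mp(2)]
    by (simp add: Ipos_def Ineg_def SS_def)
  also have "\<dots> = (\<Sum>s\<in>SS N. (\<Prod>i<N. r$(s i)) * coef s k)"
    unfolding e1 e2 coef_def by (simp add: right_diff_distrib sum_subtractf)
  finally show ?thesis .
qed

end

inductive polyfun :: "('a \<Rightarrow> real) set \<Rightarrow> ('a \<Rightarrow> real) \<Rightarrow> bool" for C where
  pconst: "polyfun C (\<lambda>x. c)"
| pvar: "f \<in> C \<Longrightarrow> polyfun C f"
| padd: "polyfun C f \<Longrightarrow> polyfun C g \<Longrightarrow> polyfun C (\<lambda>x. f x + g x)"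
| pmult: "polyfun C f \<Longrightarrow> polyfun C g \<Longrightarrow> polyfun C (\<lambda>x. f x * g x)"

lemma pdiff: "polyfun C f \<Longrightarrow> polyfun C g \<Longrightarrow> polyfun C (\<lambda>x. f x - g x)"
proof -
  assume f: "polyfun C f" and g: "polyfun C g"
  have "polyfun C (\<lambda>x. f x + (\<lambda>x. -1) x * g x)"
    by (intro padd pmult f g pconst)
  then show ?thesis by simp
qed

lemma psum: "finite S \<Longrightarrow> (\<And>i. i \<in> S \<Longrightarrow> polyfun C (f i)) \<Longrightarrow> polyfun C (\<lambda>x. \<Sum>i\<in>S. f i x)"
proof (induction S rule: finite_induct)
  case empty then show ?case using pconst[of C 0] by simp
next
  case (insert a S) then show ?case using padd[of C "f a" "\<lambda>x. \<Sum>i\<in>S. f i x"] by simp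
qed

lemma pprod: "finite S \<Longrightarrow> (\<And>i. i \<in> S \<Longrightarrow> polyfun C (f i)) \<Longrightarrow> polyfun C (\<lambda>x. \<Prod>i\<in>S. f i x)"
proof (induction S rule: finite_induct)
  case empty then show ?case using pconst[of C 1] by simp
next
  case (insert a S) then show ?case using pmult[of C "f a" "\<lambda>x. \<Prod>i\<in>S. f i x"] by simp
qed

lemma polyfun_subst:
  "polyfun C f \<Longrightarrow> (\<And>c. c \<in> C \<Longrightarrow> polyfun C' (\<lambda>x. c (\<sigma> x))) \<Longrightarrow> polyfun C' (\<lambda>x. f (\<sigma> x))"
proof (induction rule: polyfun.induct)
  case (pconst c) show ?case by (rule polyfun.pconst)
next
  case (pvar f) then show ?case by simp
next
  case (padd f g) then show ?case by (simp add: polyfun.padd)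
next
  case (pmult f g) then show ?case by (simp add: polyfun.pmult)
qed

lemma polyfun_univ:
  "polyfun C f \<Longrightarrow> (\<And>c. c \<in> C \<Longrightarrow> \<exists>q. \<forall>y. c (\<tau> y) = poly q y) \<Longrightarrow> \<exists>q. \<forall>y. f (\<tau> y) = poly q y"
proof (induction rule: polyfun.induct)
  case (pconst c) then show ?case by (intro exI[of _ "[:c:]"]) simp
next
  case (pvar f) then show ?case by simp
next
  case (padd f g)
  then obtain q1 q2 where "\<forall>y. f (\<tau> y) = poly q1 y" "\<forall>y. g (\<tau> y) = poly q2 y" by metis
  then show ?case by (intro exI[of _ "q1 + q2"]) simp
next
  case (pmult f g)
  then obtain q1 q2 where "\<forall>y. f (\<tau> y) = poly q1 y" "\<forall>y. g (\<tau> y) = poly q2 y" by metis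
  then show ?case by (intro exI[of _ "q1 * q2"]) simp
qed

lemma polyfun_meas:
  "polyfun ((\<lambda>i x. x i) ` I) f \<Longrightarrow> f \<in> borel_measurable (PiM I (\<lambda>_. lborel))"
proof (induction rule: polyfun.induct)
  case (pvar f)
  then obtain i where i: "i \<in> I" "f = (\<lambda>x. x i)" by auto
  show ?case using measurable_component_singleton[OF i(1), of "\<lambda>_. lborel"] i(2) by simp
qed auto

lemma poly_null:
  fixes I :: "'i set"
  assumes "finite I"
  shows "polyfun ((\<lambda>i x. x i) ` I) f \<Longrightarrow> x0 \<in> space (PiM I (\<lambda>_. lborel)) \<Longrightarrow> f x0 \<noteq> 0 \<Longrightarrow>
    {x \<in> space (PiM I (\<lambda>_. lborel)). f x = 0} \<in> null_sets (PiM I (\<lambda>_. lborel))"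
  using assms
proof (induction I arbitrary: f x0 rule: finite_induct)
  case empty
  then have e: "{x \<in> space (PiM {} (\<lambda>_. lborel)). f x = 0} = {}"
    by (auto simp: PiM_empty)
  show ?case unfolding e by simp
next
  case (insert i J)
  let ?P = "PiM (insert i J) (\<lambda>_. lborel :: real measure)"
  let ?PJ = "PiM J (\<lambda>_. lborel :: real measure)"
  define Z where "Z = {x \<in> space ?P. f x = 0}"
  have fm: "f \<in> borel_measurable ?P" using polyfun_meas[OF insert.prems(1)] .
  have Zs: "Z \<in> sets ?P" unfolding Z_def using fm by measurable
  interpret PS: product_sigma_finite "\<lambda>_. lborel :: real measure"
    by (simp add: product_sigma_finite_def sigma_finite_lborel)
  define y0 where "y0 = x0 i"
  define x0' where "x0' = restrict x0 J"
  define g where "g x = f (x(i := y0))" for x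
  have x0sp: "x0 \<in> PiE (insert i J) (\<lambda>_. UNIV)" using insert.prems(2) by (simp add: space_PiM)
  have x0': "x0' \<in> space ?PJ" unfolding x0'_def by (simp add: space_PiM)
  have x0eq: "x0'(i := y0) = x0"
  proof
    fix l show "(x0'(i := y0)) l = x0 l"
      using x0sp insert.hyps(2) by (cases "l = i") (auto simp: x0'_def y0_def PiE_def extensional_def)
  qed
  have gpoly: "polyfun ((\<lambda>i x. x i) ` J) g"
    unfolding g_def
  proof (rule polyfun_subst[OF insert.prems(1)])
    fix c :: "('i \<Rightarrow> real) \<Rightarrow> real" assume "c \<in> (\<lambda>i x. x i) ` insert i J"
    then obtain l where l: "l \<in> insert i J" "c = (\<lambda>x. x l)" by auto
    show "polyfun ((\<lambda>i x. x i) ` J) (\<lambda>x. c (x(i := y0)))"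
    proof (cases "l = i")
      case True then show ?thesis using l by (simp add: pconst)
    next
      case False then show ?thesis using l by (auto intro!: pvar)
    qed
  qed
  have gx0: "g x0' \<noteq> 0" using insert.prems(3) by (simp add: g_def x0eq)
  have Bnull: "{x \<in> space ?PJ. g x = 0} \<in> null_sets ?PJ"
    using insert.IH[OF gpoly x0' gx0] .
  have slice: "(\<integral>\<^sup>+y. indicator Z (x(i := y)) \<partial>lborel) = 0"
    if x: "x \<in> space ?PJ" "g x \<noteq> 0" for x
  proof -
    obtain q where q: "\<forall>y. f (x(i := y)) = poly q y"
    proof -
      have "\<exists>q. \<forall>y. f (x(i := y)) = poly q y"
      proof (rule polyfun_univ[OF insert.prems(1)])
        fix c :: "('i \<Rightarrow> real) \<Rightarrow> real" assume "c \<in> (\<lambda>i x. x i) ` insert i J"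
        then obtain l where l: "c = (\<lambda>x. x l)" by auto
        show "\<exists>q. \<forall>y. c (x(i := y)) = poly q y"
        proof (cases "l = i")
          case True then show ?thesis using l by (intro exI[of _ "[:0, 1:]"]) simp
        next
          case False then show ?thesis using l by (intro exI[of _ "[:x l:]"]) simp
        qed
      qed
      then show ?thesis using that by blast
    qed
    have "q \<noteq> 0" using q x(2) by (auto simp: g_def)
    then have fin: "finite {y. poly q y = 0}" by (rule poly_roots_finite)
    have "\<And>y. x(i := y) \<in> space ?P" using x(1) insert.hyps(2) by (auto simp: space_PiM PiE_def extensional_def)
    then have "\<And>y. indicator Z (x(i := y)) = (indicator {y. poly q y = 0} y :: ennreal)"
      by (simp add: Z_def q indicator_def)
    moreover have ms: "{y. poly q y = 0} \<in> sets lborel"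
      using countable_imp_null_set_lborel[OF countable_finite[OF fin]] by auto
    ultimately have "(\<integral>\<^sup>+y. indicator Z (x(i := y)) \<partial>lborel) = emeasure lborel {y. poly q y = 0}"
      by simp
    also have "\<dots> = 0"
      using countable_imp_null_set_lborel[OF countable_finite[OF fin]] by auto
    finally show ?thesis .
  qed
  have "emeasure ?P Z = (\<integral>\<^sup>+x. indicator Z x \<partial>?P)" using Zs by simp
  also have "\<dots> = (\<integral>\<^sup>+x. (\<integral>\<^sup>+y. indicator Z (x(i := y)) \<partial>lborel) \<partial>?PJ)"
    using PS.product_nn_integral_insert[OF insert.hyps(1,2), of "indicator Z"] Zs by simp
  also have "\<dots> = (\<integral>\<^sup>+x. 0 \<partial>?PJ)"
  proof (rule nn_integral_cong_AE)
    show "AE x in ?PJ. (\<integral>\<^sup>+y. indicator Z (x(i := y)) \<partial>lborel) = 0"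
      using AE_not_in[OF Bnull] AE_space
      by eventually_elim (auto intro: slice)
  qed
  also have "\<dots> = 0" by simp
  finally have "emeasure ?P Z = 0" .
  then show ?case using Zs by (auto simp: Z_def)
qed

definition Qf :: "((nat \<Rightarrow> 'k::finite) \<Rightarrow> 'k \<Rightarrow> real) \<Rightarrow> nat \<Rightarrow> 'k \<Rightarrow> real^'k \<Rightarrow> real" where
  "Qf c N k r = (\<Sum>s\<in>SS N. c s k * (\<Prod>i<N. r$(s i)))"

definition DQ :: "((nat \<Rightarrow> 'k::finite) \<Rightarrow> 'k \<Rightarrow> real) \<Rightarrow> nat \<Rightarrow> 'k \<Rightarrow> real^'k \<Rightarrow> real^'k \<Rightarrow> real" where
  "DQ c N k r h = (\<Sum>s\<in>SS N. c s k * (\<Sum>m\<in>{..<N}. h$(s m) * (\<Prod>i\<in>{..<N} - {m}. r$(s i))))"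

definition Hf :: "((nat \<Rightarrow> 'k::finite) \<Rightarrow> 'k \<Rightarrow> real) \<Rightarrow> nat \<Rightarrow> 'k \<Rightarrow> real^'k \<Rightarrow> real" where
  "Hf c N j r = (\<Sum>i\<in>UNIV. r$i) * (\<Sum>k\<in>UNIV. r$k * DQ c N k r (axis j 1))
     - real N * (\<Sum>k\<in>UNIV. r$k * Qf c N k r)"

lemma vec_nth_deriv: "((\<lambda>x::real^'k::finite. x$i) has_derivative (\<lambda>h. h$i)) F"
  by (rule bounded_linear_imp_has_derivative) (rule bounded_linear_vec_nth)

lemma Q_deriv: "(Qf c N k has_derivative DQ c N k p) (at p within S)"
proof -
  have "((\<lambda>x. \<Sum>s\<in>SS N. c s k * (\<Prod>i<N. x$(s i))) has_derivative
        (\<lambda>h. \<Sum>s\<in>SS N. c s k * (\<Sum>m\<in>{..<N}. h$(s m) * (\<Prod>i\<in>{..<N} - {m}. p$(s i))))) (at p within S)"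
    by (intro has_derivative_sum has_derivative_mult_right has_derivative_prod vec_nth_deriv)
  then show ?thesis unfolding Qf_def[abs_def] DQ_def[abs_def] .
qed

lemma axis_sum: "(\<Sum>j\<in>UNIV. h$j * (axis j (1::real) :: real^'k::finite)$l) = h$l"
proof -
  have "\<And>j. h$j * (axis j (1::real) :: real^'k)$l = (if j = l then h$l else 0)"
    by (auto simp: axis_def)
  then show ?thesis by simp
qed

lemma DQ_lin: "DQ c N k r h = (\<Sum>j\<in>UNIV. h$j * DQ c N k r (axis j 1))"
proof -
  let ?P = "\<lambda>s m. (\<Prod>i\<in>{..<N} - {m}. r$(s i))"
  have "(\<Sum>j\<in>UNIV. h$j * DQ c N k r (axis j 1)) =
     (\<Sum>j\<in>UNIV. \<Sum>s\<in>SS N. \<Sum>m\<in>{..<N}. h$j * (axis j 1 :: real^_)$(s m) * (c s k * ?P s m))"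
    unfolding DQ_def sum_distrib_left by (intro sum.cong refl) (simp add: algebra_simps)
  also have "\<dots> = (\<Sum>s\<in>SS N. \<Sum>j\<in>UNIV. \<Sum>m\<in>{..<N}. h$j * (axis j 1 :: real^_)$(s m) * (c s k * ?P s m))"
    by (rule sum.swap)
  also have "\<dots> = (\<Sum>s\<in>SS N. \<Sum>m\<in>{..<N}. \<Sum>j\<in>UNIV. h$j * (axis j 1 :: real^_)$(s m) * (c s k * ?P s m))"
    by (intro sum.cong refl) (rule sum.swap)
  also have "\<dots> = (\<Sum>s\<in>SS N. \<Sum>m\<in>{..<N}. (\<Sum>j\<in>UNIV. h$j * (axis j 1 :: real^_)$(s m)) * (c s k * ?P s m))"
    by (simp add: sum_distrib_right)
  also have "\<dots> = DQ c N k r h"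
    unfolding axis_sum DQ_def sum_distrib_left by (intro sum.cong refl) (simp add: algebra_simps)
  finally show ?thesis ..
qed

lemma DQ_scale: "DQ c N k r (t *\<^sub>R h) = t * DQ c N k r h"
  unfolding DQ_def by (simp add: sum_distrib_left algebra_simps)

lemma DQ_euler: "DQ c N k r r = real N * Qf c N k r"
proof -
  have "(\<Sum>m\<in>{..<N}. r$(s m) * (\<Prod>i\<in>{..<N} - {m}. r$(s i))) = real N * (\<Prod>i<N. r$(s i))" for s
  proof -
    have "(\<Sum>m\<in>{..<N}. r$(s m) * (\<Prod>i\<in>{..<N} - {m}. r$(s i))) = (\<Sum>m\<in>{..<N}. (\<Prod>i<N. r$(s i)))"
      by (rule sum.cong[OF refl]) (subst (2) prod.remove, auto)
    then show ?thesis by simp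
  qed
  then show ?thesis unfolding DQ_def Qf_def by (simp add: sum_distrib_left algebra_simps)
qed

lemma prod_scale: "finite A \<Longrightarrow> (\<Prod>i\<in>A. t * f i) = t ^ card A * (\<Prod>i\<in>A. f i :: real)"
  by (simp add: prod.distrib)

lemma Q_hom: "Qf c N k (t *\<^sub>R r) = t ^ N * Qf c N k r"
  unfolding Qf_def by (simp add: prod_scale sum_distrib_left algebra_simps)

lemma DQ_hom: "N \<ge> 1 \<Longrightarrow> t * DQ c N k (t *\<^sub>R r) h = t ^ N * DQ c N k r h"
proof -
  assume N: "N \<ge> 1"
  have "t * (\<Prod>i\<in>{..<N} - {m}. t * r$(s i)) = t ^ N * (\<Prod>i\<in>{..<N} - {m}. r$(s i))" if m: "m < N" for m s
  proof -
    have "card ({..<N} - {m}) = N - 1" using m by simp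
    then have "t * (\<Prod>i\<in>{..<N} - {m}. t * r$(s i)) = t * t ^ (N - 1) * (\<Prod>i\<in>{..<N} - {m}. r$(s i))"
      by (simp add: prod_scale)
    also have "t * t ^ (N - 1) = t ^ N" using N by (simp add: power_eq_if[of t N])
    finally show ?thesis .
  qed
  then have e: "t * (a * (b * (\<Prod>i\<in>{..<N} - {m}. t * r$(s i)))) = t^N * (a * (b * (\<Prod>i\<in>{..<N} - {m}. r$(s i))))"
    if "m < N" for a b m s
    using that by (metis mult.left_commute)
  have "t * DQ c N k (t *\<^sub>R r) h = (\<Sum>s\<in>SS N. \<Sum>m<N. t * (c s k * (h$(s m) * (\<Prod>i\<in>{..<N}-{m}. t * r$(s i)))))"
    by (simp add: DQ_def sum_distrib_left)
  also have "\<dots> = (\<Sum>s\<in>SS N. \<Sum>m<N. t^N * (c s k * (h$(s m) * (\<Prod>i\<in>{..<N}-{m}. r$(s i)))))"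
    by (intro sum.cong refl) (simp add: e)
  also have "\<dots> = t ^ N * DQ c N k r h"
    by (simp add: DQ_def sum_distrib_left)
  finally show ?thesis .
qed

lemma orth_pos: "p \<in> orthant_nz \<Longrightarrow> 0 < (\<Sum>i\<in>UNIV. p$i) \<and> (\<forall>i. 0 \<le> p$i)"
proof -
  assume p: "p \<in> orthant_nz"
  then have nn: "\<forall>i. 0 \<le> p$i" and nz: "p \<noteq> 0" unfolding orthant_nz_def by auto
  from nz obtain i where "p$i \<noteq> 0" by (auto simp: vec_eq_iff)
  with nn have "0 < p$i" by (simp add: order_less_le)
  also have "p$i \<le> (\<Sum>i\<in>UNIV. p$i)" by (rule member_le_sum) (use nn in auto)
  finally show ?thesis using nn by simp
qed

lemma orth_scale: "p \<in> orthant_nz \<Longrightarrow> (1 / (\<Sum>i\<in>UNIV. p$i)) *\<^sub>R p \<in> prob_simplex"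
proof -
  assume p: "p \<in> orthant_nz"
  note pp = orth_pos[OF p]
  have "(\<Sum>i\<in>UNIV. p$i / (\<Sum>i\<in>UNIV. p$i)) = 1"
    using pp by (simp add: sum_divide_distrib[symmetric])
  then show ?thesis using pp unfolding prob_simplex_def by simp
qed

context
  fixes M :: "'z measure" and D :: "'k::finite \<Rightarrow> 'z measure"
    and loss :: "'h \<Rightarrow> 'z \<Rightarrow> real" and A :: "(nat \<Rightarrow> 'z) \<Rightarrow> 'h" and N :: nat
    and c :: "(nat \<Rightarrow> 'k) \<Rightarrow> 'k \<Rightarrow> real"
  assumes N1: "N \<ge> 1"
    and E: "\<forall>r\<in>prob_simplex. \<forall>k. exp_err M D loss A N r k = Qf c N k r"
begin

lemma ferr_orth: "p \<in> orthant_nz \<Longrightarrow> ferr M D loss A N p k = Qf c N k p / (\<Sum>i\<in>UNIV. p$i) ^ N"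
proof -
  assume p: "p \<in> orthant_nz"
  have "exp_err M D loss A N ((1 / (\<Sum>i\<in>UNIV. p$i)) *\<^sub>R p) k = Qf c N k ((1 / (\<Sum>i\<in>UNIV. p$i)) *\<^sub>R p)"
    using E orth_scale[OF p] by blast
  then show ?thesis by (simp add: ferr_def Q_hom power_one_over)
qed

lemma ferr_simplex: "r \<in> prob_simplex \<Longrightarrow> ferr M D loss A N r k = Qf c N k r"
  unfolding ferr_def using E by (simp add: prob_simplex_def)

lemma Lsame_F: "p \<in> orthant_nz \<Longrightarrow>
   Lsame M D loss A N p = (\<Sum>k\<in>UNIV. p$k * Qf c N k p) / (\<Sum>i\<in>UNIV. p$i) ^ N"
  unfolding Lsame_def by (simp add: ferr_orth sum_divide_distrib)

lemma F_deriv: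
  assumes p: "p \<in> orthant_nz"
  shows "((\<lambda>x. (\<Sum>k\<in>UNIV. x$k * Qf c N k x) / (\<Sum>i\<in>UNIV. x$i) ^ N) has_derivative
     (\<lambda>h. - (\<Sum>k\<in>UNIV. p$k * Qf c N k p) * (inverse ((\<Sum>i\<in>UNIV. p$i) ^ N) * (real N * (\<Sum>i\<in>UNIV. h$i) * (\<Sum>i\<in>UNIV. p$i) ^ (N - 1)) * inverse ((\<Sum>i\<in>UNIV. p$i) ^ N))
       + (\<Sum>k\<in>UNIV. p$k * DQ c N k p h + h$k * Qf c N k p) / (\<Sum>i\<in>UNIV. p$i) ^ N)) (at p within S)"
  using orth_pos[OF p]
  by (intro has_derivative_divide has_derivative_sum has_derivative_mult has_derivative_power
      vec_nth_deriv Q_deriv) auto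

lemma right_case:
  assumes HZ: "\<forall>p\<in>orthant_nz. \<forall>j. Hf c N j p = 0" and p: "p \<in> orthant_nz"
  shows "(Lsame M D loss A N has_derivative (\<lambda>h. \<Sum>k\<in>UNIV. ferr M D loss A N p k * h$k)) (at p within orthant_nz)"
proof -
  define S where "S = (\<Sum>i\<in>UNIV. p$i)"
  define T where "T = (\<Sum>k\<in>UNIV. p$k * Qf c N k p)"
  have Spos: "0 < S" using orth_pos[OF p] by (simp add: S_def)
  have G: "(\<Sum>k\<in>UNIV. p$k * DQ c N k p (axis j 1)) = real N * T / S" for j
  proof -
    have "S * (\<Sum>k\<in>UNIV. p$k * DQ c N k p (axis j 1)) - real N * T = 0"
      using HZ p unfolding Hf_def S_def T_def by blast
    then show ?thesis using Spos by (simp add: field_simps)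
  qed
  have lin: "(\<Sum>k\<in>UNIV. p$k * DQ c N k p h) = real N * T / S * (\<Sum>i\<in>UNIV. h$i)" for h
  proof -
    have "(\<Sum>k\<in>UNIV. p$k * DQ c N k p h) = (\<Sum>k\<in>UNIV. \<Sum>j\<in>UNIV. h$j * (p$k * DQ c N k p (axis j 1)))"
      by (subst DQ_lin) (simp add: sum_distrib_left algebra_simps)
    also have "\<dots> = (\<Sum>j\<in>UNIV. h$j * (\<Sum>k\<in>UNIV. p$k * DQ c N k p (axis j 1)))"
      by (subst sum.swap) (simp add: sum_distrib_left)
    also have "\<dots> = real N * T / S * (\<Sum>i\<in>UNIV. h$i)"
      by (simp add: G sum_distrib_left sum_distrib_right sum_divide_distrib algebra_simps)
    finally show ?thesis .
  qed
  have SN: "S ^ N = S * S ^ (N - 1)" using N1 by (simp add: power_eq_if[of S N])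
  have deq: "(\<lambda>h. - (\<Sum>k\<in>UNIV. p$k * Qf c N k p) * (inverse ((\<Sum>i\<in>UNIV. p$i) ^ N) * (real N * (\<Sum>i\<in>UNIV. h$i) * (\<Sum>i\<in>UNIV. p$i) ^ (N - 1)) * inverse ((\<Sum>i\<in>UNIV. p$i) ^ N))
       + (\<Sum>k\<in>UNIV. p$k * DQ c N k p h + h$k * Qf c N k p) / (\<Sum>i\<in>UNIV. p$i) ^ N)
     = (\<lambda>h. \<Sum>k\<in>UNIV. ferr M D loss A N p k * h$k)"
  proof
    fix h :: "real^'k"
    have "(\<Sum>k\<in>UNIV. p$k * DQ c N k p h + h$k * Qf c N k p) = real N * T / S * (\<Sum>i\<in>UNIV. h$i) + (\<Sum>k\<in>UNIV. h$k * Qf c N k p)"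
      by (simp add: sum.distrib lin)
    moreover have "(\<Sum>k\<in>UNIV. ferr M D loss A N p k * h$k) = (\<Sum>k\<in>UNIV. h$k * Qf c N k p) / S ^ N"
      by (simp add: ferr_orth[OF p] S_def sum_divide_distrib algebra_simps)
    moreover have "S ^ (N - 1) > 0" using Spos by simp
    ultimately show "- (\<Sum>k\<in>UNIV. p$k * Qf c N k p) * (inverse ((\<Sum>i\<in>UNIV. p$i) ^ N) * (real N * (\<Sum>i\<in>UNIV. h$i) * (\<Sum>i\<in>UNIV. p$i) ^ (N - 1)) * inverse ((\<Sum>i\<in>UNIV. p$i) ^ N))
       + (\<Sum>k\<in>UNIV. p$k * DQ c N k p h + h$k * Qf c N k p) / (\<Sum>i\<in>UNIV. p$i) ^ N
     = (\<Sum>k\<in>UNIV. ferr M D loss A N p k * h$k)"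
      unfolding S_def[symmetric] T_def[symmetric] SN using Spos
      by (simp add: field_simps)
  qed
  have "((\<lambda>x. (\<Sum>k\<in>UNIV. x$k * Qf c N k x) / (\<Sum>i\<in>UNIV. x$i) ^ N) has_derivative
      (\<lambda>h. \<Sum>k\<in>UNIV. ferr M D loss A N p k * h$k)) (at p within orthant_nz)"
    using F_deriv[OF p, of orthant_nz] unfolding deq .
  then show ?thesis
    by (rule has_derivative_transform_within[OF _ zero_less_one p]) (simp add: Lsame_F)
qed

end

lemma axis_sum1: "(\<Sum>i\<in>UNIV. (axis j (1::real) :: real^'k::finite)$i) = 1"
proof -
  have "\<And>i. (axis j (1::real) :: real^'k)$i = (if i = j then 1 else 0)" by (simp add: axis_def)
  then show ?thesis by simp
qed

context
  fixes M :: "'z measure" and D :: "'k::finite \<Rightarrow> 'z measure"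
    and loss :: "'h \<Rightarrow> 'z \<Rightarrow> real" and A :: "(nat \<Rightarrow> 'z) \<Rightarrow> 'h" and N :: nat
    and c :: "(nat \<Rightarrow> 'k) \<Rightarrow> 'k \<Rightarrow> real"
  assumes N1: "N \<ge> 1"
    and E: "\<forall>r\<in>prob_simplex. \<forall>k. exp_err M D loss A N r k = Qf c N k r"
begin

lemma Q_bound: "r \<in> prob_simplex \<Longrightarrow> \<bar>Qf c N k r\<bar> \<le> (\<Sum>s\<in>SS N. \<bar>c s k\<bar>)"
proof -
  assume r: "r \<in> prob_simplex"
  have r01: "0 \<le> r$i \<and> r$i \<le> 1" for i
  proof -
    have nn: "\<forall>i. 0 \<le> r$i" and s1: "(\<Sum>i\<in>UNIV. r$i) = 1" using r unfolding prob_simplex_def by auto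
    have "r$i \<le> (\<Sum>i\<in>UNIV. r$i)" by (rule member_le_sum) (use nn in auto)
    then show ?thesis using nn s1 by auto
  qed
  have "\<bar>Qf c N k r\<bar> \<le> (\<Sum>s\<in>SS N. \<bar>c s k * (\<Prod>i<N. r$(s i))\<bar>)"
    unfolding Qf_def by (rule sum_abs)
  also have "\<dots> \<le> (\<Sum>s\<in>SS N. \<bar>c s k\<bar>)"
  proof (rule sum_mono)
    fix s
    have "0 \<le> (\<Prod>i<N. r$(s i))" "(\<Prod>i<N. r$(s i)) \<le> 1"
      using r01 by (auto intro: prod_nonneg prod_le_1)
    then show "\<bar>c s k * (\<Prod>i<N. r$(s i))\<bar> \<le> \<bar>c s k\<bar>"
      by (simp add: abs_mult mult_left_le)
  qed
  finally show ?thesis .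
qed

lemma lagrange:
  assumes p: "p \<in> prob_simplex" and ppos: "\<forall>i. 0 < p$i"
    and eq: "Lsame M D loss A N p = Lstar M D loss A N p"
  shows "Hf c N j p = 0"
proof -
  define \<phi> where "\<phi> r = (\<Sum>k\<in>UNIV. p$k * Qf c N k r)" for r
  have p1: "(\<Sum>i\<in>UNIV. p$i) = 1" using p unfolding prob_simplex_def by auto
  have LNeq: "LN M D loss A N p r = \<phi> r" if "r \<in> prob_simplex" for r
    unfolding LN_def \<phi>_def using ferr_simplex[OF N1 E that] by simp
  have Lseq: "Lsame M D loss A N p = \<phi> p"
    unfolding Lsame_def \<phi>_def using ferr_simplex[OF N1 E p] by simp
  have bdd: "bdd_below (LN M D loss A N p ` prob_simplex)"
  proof (rule bdd_belowI2)
    fix r :: "real^'k" assume r: "r \<in> prob_simplex"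
    have "- (\<Sum>k\<in>UNIV. p$k * (\<Sum>s\<in>SS N. \<bar>c s k\<bar>)) \<le> \<phi> r"
      unfolding \<phi>_def sum_negf[symmetric]
    proof (rule sum_mono)
      fix k
      have "- (\<Sum>s\<in>SS N. \<bar>c s k\<bar>) \<le> Qf c N k r" using Q_bound[OF r, of k] by linarith
      then show "- (p$k * (\<Sum>s\<in>SS N. \<bar>c s k\<bar>)) \<le> p$k * Qf c N k r"
      proof -
        have "p$k * (- (\<Sum>s\<in>SS N. \<bar>c s k\<bar>)) \<le> p$k * Qf c N k r"
          using ppos[rule_format, of k] \<open>- (\<Sum>s\<in>SS N. \<bar>c s k\<bar>) \<le> Qf c N k r\<close>
          by (intro mult_left_mono) auto
        then show ?thesis by simp
      qed
    qed
    then show "- (\<Sum>k\<in>UNIV. p$k * (\<Sum>s\<in>SS N. \<bar>c s k\<bar>)) \<le> LN M D loss A N p r"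
      using LNeq[OF r] by simp
  qed
  have minim: "\<phi> p \<le> \<phi> r" if r: "r \<in> prob_simplex" for r
  proof -
    have "Lstar M D loss A N p \<le> LN M D loss A N p r"
      unfolding Lstar_def by (rule cINF_lower[OF bdd r])
    then show ?thesis using eq Lseq LNeq[OF r] by simp
  qed
  define G where "G i = (\<Sum>k\<in>UNIV. p$k * DQ c N k p (axis i 1))" for i
  have Geq: "G i = G l" for i l
  proof -
    define v :: "real^'k" where "v = axis i 1 - axis l 1"
    define d where "d = min (p$i) (p$l)"
    have d: "0 < d" using ppos by (simp add: d_def)
    have inS: "p + y *\<^sub>R v \<in> prob_simplex" if y: "\<bar>y\<bar> < d" for y
    proof -
      have "0 \<le> (p + y *\<^sub>R v)$m" for m
      proof -
        have "(p + y *\<^sub>R v)$m = p$m + y * ((if m = i then 1 else 0) - (if m = l then 1 else 0))"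
          by (simp add: v_def axis_def)
        then show ?thesis using y ppos[rule_format, of m] unfolding d_def by (auto split: if_splits)
      qed
      moreover have "(\<Sum>m\<in>UNIV. (p + y *\<^sub>R v)$m) = 1"
        by (simp add: v_def sum.distrib sum_subtractf sum_distrib_left[symmetric] axis_sum1 p1)
      ultimately show ?thesis unfolding prob_simplex_def by auto
    qed
    have phid: "(\<phi> has_derivative (\<lambda>h. \<Sum>k\<in>UNIV. p$k * DQ c N k p h)) (at p)"
      unfolding \<phi>_def[abs_def]
      by (intro has_derivative_sum has_derivative_mult_right Q_deriv)
    have lined: "((\<lambda>y::real. p + y *\<^sub>R v) has_derivative (\<lambda>y. y *\<^sub>R v)) (at 0)"
      by (auto intro!: derivative_eq_intros)
    have comp: "((\<lambda>y. \<phi> (p + y *\<^sub>R v)) has_derivative (\<lambda>y. \<Sum>k\<in>UNIV. p$k * DQ c N k p (y *\<^sub>R v))) (at 0)"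
      using has_derivative_compose[OF lined, of \<phi>] phid by simp
    have "(\<lambda>y. \<Sum>k\<in>UNIV. p$k * DQ c N k p (y *\<^sub>R v)) = (*) (\<Sum>k\<in>UNIV. p$k * DQ c N k p v)"
      by (rule ext) (simp add: DQ_scale sum_distrib_left algebra_simps)
    with comp have "DERIV (\<lambda>y. \<phi> (p + y *\<^sub>R v)) 0 :> (\<Sum>k\<in>UNIV. p$k * DQ c N k p v)"
      unfolding has_field_derivative_def by simp
    moreover have "\<forall>y. \<bar>0 - y\<bar> < d \<longrightarrow> \<phi> (p + 0 *\<^sub>R v) \<le> \<phi> (p + y *\<^sub>R v)"
      using minim inS by simp
    ultimately have z: "(\<Sum>k\<in>UNIV. p$k * DQ c N k p v) = 0"
      by (rule DERIV_local_min[OF _ d])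
    have "DQ c N k p v = DQ c N k p (axis i 1) - DQ c N k p (axis l 1)" for k
    proof -
      have "DQ c N k p v = (\<Sum>m\<in>UNIV. ((axis i 1 :: real^'k)$m - (axis l 1 :: real^'k)$m) * DQ c N k p (axis m 1))"
        by (subst DQ_lin) (simp add: v_def)
      also have "\<dots> = DQ c N k p (axis i 1) - DQ c N k p (axis l 1)"
        by (simp add: left_diff_distrib sum_subtractf DQ_lin[symmetric])
      finally show ?thesis .
    qed
    then show ?thesis using z by (simp add: G_def right_diff_distrib sum_subtractf)
  qed
  have "(\<Sum>i\<in>UNIV. p$i * G i) = real N * \<phi> p"
  proof -
    have "(\<Sum>i\<in>UNIV. p$i * G i) = (\<Sum>k\<in>UNIV. p$k * (\<Sum>i\<in>UNIV. p$i * DQ c N k p (axis i 1)))"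
      unfolding G_def sum_distrib_left
      by (subst sum.swap) (simp add: algebra_simps)
    also have "\<dots> = (\<Sum>k\<in>UNIV. p$k * DQ c N k p p)"
      by (simp add: DQ_lin[symmetric])
    also have "\<dots> = real N * \<phi> p"
      by (simp add: DQ_euler \<phi>_def sum_distrib_left algebra_simps)
    finally show ?thesis .
  qed
  moreover have "(\<Sum>i\<in>UNIV. p$i * G i) = G j"
  proof -
    have "(\<Sum>i\<in>UNIV. p$i * G i) = (\<Sum>i\<in>UNIV. p$i * G j)" using Geq by (intro sum.cong) auto
    also have "\<dots> = (\<Sum>i\<in>UNIV. p$i) * G j" by (simp add: sum_distrib_right)
    finally show ?thesis using p1 by simp
  qed
  ultimately show ?thesis
    unfolding Hf_def using p1 by (simp add: G_def \<phi>_def)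
qed

end

lemma Hf_poly: "polyfun (range (\<lambda>i (x::real^'k::finite). x$i)) (Hf c N j)"
  unfolding Hf_def[abs_def] DQ_def Qf_def
  by (intro pdiff pmult psum pprod pconst finite finite_SS finite_lessThan finite_Diff pvar) auto

lemma Hf_hom:
  assumes N1: "N \<ge> 1"
  shows "Hf c N j (t *\<^sub>R r) = t ^ (N + 1) * Hf c N j r"
proof -
  have a: "(\<Sum>k\<in>UNIV. (t *\<^sub>R r)$k * DQ c N k (t *\<^sub>R r) (axis j 1)) = t^N * (\<Sum>k\<in>UNIV. r$k * DQ c N k r (axis j 1))"
    unfolding sum_distrib_left
  proof (rule sum.cong[OF refl])
    fix k
    have "(t *\<^sub>R r)$k * DQ c N k (t *\<^sub>R r) (axis j 1) = r$k * (t * DQ c N k (t *\<^sub>R r) (axis j 1))" by simp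
    also have "\<dots> = t^N * (r$k * DQ c N k r (axis j 1))" by (simp add: DQ_hom[OF N1])
    finally show "(t *\<^sub>R r)$k * DQ c N k (t *\<^sub>R r) (axis j 1) = t^N * (r$k * DQ c N k r (axis j 1))" .
  qed
  have b: "(\<Sum>k\<in>UNIV. (t *\<^sub>R r)$k * Qf c N k (t *\<^sub>R r)) = t^(N+1) * (\<Sum>k\<in>UNIV. r$k * Qf c N k r)"
    unfolding sum_distrib_left by (intro sum.cong refl) (simp add: Q_hom)
  have s: "(\<Sum>i\<in>UNIV. (t *\<^sub>R r)$i) = t * (\<Sum>i\<in>UNIV. r$i)" by (simp add: sum_distrib_left)
  show ?thesis unfolding Hf_def a b s by (simp add: algebra_simps)
qed

context
  fixes M :: "'z measure" and D :: "'k::finite \<Rightarrow> 'z measure"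
    and loss :: "'h \<Rightarrow> 'z \<Rightarrow> real" and A :: "(nat \<Rightarrow> 'z) \<Rightarrow> 'h" and N :: nat
    and c :: "(nat \<Rightarrow> 'k) \<Rightarrow> 'k \<Rightarrow> real"
  assumes N1: "N \<ge> 1"
    and E: "\<forall>r\<in>prob_simplex. \<forall>k. exp_err M D loss A N r k = Qf c N k r"
begin

lemma left_case:
  assumes p0: "p0 \<in> orthant_nz" and H0: "Hf c N j p0 \<noteq> 0"
  shows "simplex_null {p \<in> prob_simplex. Lsame M D loss A N p = Lstar M D loss A N p}"
  unfolding simplex_null_def
proof
  fix k0 :: 'k
  define I where "I = UNIV - {k0}"
  let ?P = "PiM I (\<lambda>_. lborel :: real measure)"
  define proj :: "real^'k \<Rightarrow> 'k \<Rightarrow> real" where "proj p = restrict (\<lambda>i. p$i) I" for p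
  define lift :: "('k \<Rightarrow> real) \<Rightarrow> real^'k" where
    "lift x = (\<chi> i. if i = k0 then 1 - (\<Sum>l\<in>I. x l) else x i)" for x
  define P1 :: "('k \<Rightarrow> real) \<Rightarrow> real" where "P1 x = (1 - (\<Sum>l\<in>I. x l)) * (\<Prod>l\<in>I. x l)" for x
  define P2 where "P2 x = Hf c N j (lift x)" for x
  have finI: "finite I" by simp
  have sumI: "(\<Sum>l\<in>UNIV. q$l) = q$k0 + (\<Sum>l\<in>I. q$l)" for q :: "real^'k"
    unfolding I_def by (subst sum.remove[of UNIV k0]) auto
  have lp: "lift (proj q) = q" if q: "q \<in> prob_simplex" for q
  proof -
    have "(\<Sum>l\<in>UNIV. q$l) = 1" using q unfolding prob_simplex_def by auto
    then show ?thesis using sumI[of q]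
      by (auto simp: vec_eq_iff lift_def proj_def I_def)
  qed
  have psp: "proj q \<in> space ?P" for q by (simp add: proj_def space_PiM)
  have poly1: "polyfun ((\<lambda>i x. x i) ` I) P1"
    unfolding P1_def[abs_def]
    by (intro pmult pdiff psum pprod pconst finI pvar) auto
  have poly2: "polyfun ((\<lambda>i x. x i) ` I) P2"
    unfolding P2_def[abs_def]
  proof (rule polyfun_subst[OF Hf_poly])
    fix f :: "real^'k \<Rightarrow> real" assume "f \<in> range (\<lambda>i x. x$i)"
    then obtain i where i: "f = (\<lambda>x. x$i)" by auto
    show "polyfun ((\<lambda>i x. x i) ` I) (\<lambda>x. f (lift x))"
    proof (cases "i = k0")
      case True
      have "polyfun ((\<lambda>i x. x i) ` I) (\<lambda>x. 1 - (\<Sum>l\<in>I. x l))"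
        by (intro pdiff psum pconst finI pvar) auto
      then show ?thesis using True by (simp add: i lift_def)
    next
      case False
      have "polyfun ((\<lambda>i x. x i) ` I) (\<lambda>x. x i)" using False by (intro pvar) (auto simp: I_def)
      then show ?thesis using False by (simp add: i lift_def)
    qed
  qed
  define u :: "'k \<Rightarrow> real" where "u = restrict (\<lambda>_. 1 / real CARD('k)) I"
  have usp: "u \<in> space ?P" by (simp add: u_def space_PiM)
  have "P1 u \<noteq> 0"
  proof -
    have cI: "card I = CARD('k) - 1" unfolding I_def by (simp add: card_Diff_singleton)
    have K: "CARD('k) \<ge> 1" by (simp add: Suc_le_eq)
    have "(\<Sum>l\<in>I. u l) = real (CARD('k) - 1) / real CARD('k)"
      by (simp add: u_def cI)
    also have "\<dots> < 1" using K by (simp add: of_nat_diff)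
    finally have a: "1 - (\<Sum>l\<in>I. u l) \<noteq> 0" by simp
    have "(\<Prod>l\<in>I. u l) > 0" by (rule prod_pos) (simp add: u_def)
    then have b: "(\<Prod>l\<in>I. u l) \<noteq> 0" by linarith
    show ?thesis unfolding P1_def using a b by (rule no_zero_divisors)
  qed
  then have Z1: "{x \<in> space ?P. P1 x = 0} \<in> null_sets ?P"
    by (rule poly_null[OF finI poly1 usp])
  define S0 where "S0 = (\<Sum>i\<in>UNIV. p0$i)"
  define q0 where "q0 = (1 / S0) *\<^sub>R p0"
  have S0: "0 < S0" using orth_pos[OF p0] by (simp add: S0_def)
  have q0: "q0 \<in> prob_simplex" unfolding q0_def S0_def by (rule orth_scale[OF p0])
  have "Hf c N j q0 = (1 / S0) ^ (N + 1) * Hf c N j p0" unfolding q0_def by (rule Hf_hom[OF N1])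
  then have "Hf c N j q0 \<noteq> 0" using H0 S0 by simp
  then have "P2 (proj q0) \<noteq> 0" by (simp add: P2_def lp[OF q0])
  then have Z2: "{x \<in> space ?P. P2 x = 0} \<in> null_sets ?P"
    by (rule poly_null[OF finI poly2 psp])
  let ?Ms = "{p \<in> prob_simplex. Lsame M D loss A N p = Lstar M D loss A N p}"
  have key: "\<exists>Z\<in>null_sets ?P. proj ` ?Ms \<subseteq> Z"
  proof (rule bexI[of _ "{x \<in> space ?P. P1 x = 0} \<union> {x \<in> space ?P. P2 x = 0}"])
    show "{x \<in> space ?P. P1 x = 0} \<union> {x \<in> space ?P. P2 x = 0} \<in> null_sets ?P"
      by (rule null_sets.Un[OF Z1 Z2])
    show "proj ` ?Ms \<subseteq> {x \<in> space ?P. P1 x = 0} \<union> {x \<in> space ?P. P2 x = 0}"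
    proof
      fix x assume "x \<in> proj ` ?Ms"
      then obtain p where p: "p \<in> prob_simplex" and eq: "Lsame M D loss A N p = Lstar M D loss A N p"
        and x: "x = proj p" by blast
      have nn: "\<forall>i. 0 \<le> p$i" and p1: "(\<Sum>i\<in>UNIV. p$i) = 1" using p unfolding prob_simplex_def by auto
      show "x \<in> {x \<in> space ?P. P1 x = 0} \<union> {x \<in> space ?P. P2 x = 0}"
      proof (cases "\<forall>i. 0 < p$i")
        case True
        have "Hf c N j p = 0" by (rule lagrange[OF N1 E p True eq])
        then have "P2 (proj p) = 0" by (simp add: P2_def lp[OF p])
        then show ?thesis using psp[of p] x by blast
      next
        case False
        then obtain i where "\<not> 0 < p$i" by blast
        then have i: "p$i = 0" using nn[rule_format, of i] by linarith
        have "P1 (proj p) = 0"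
        proof (cases "i = k0")
          case True
          then have "(\<Sum>l\<in>I. p$l) = 1" using sumI[of p] p1 i by simp
          moreover have "(\<Sum>l\<in>I. proj p l) = (\<Sum>l\<in>I. p$l)" by (rule sum.cong) (auto simp: proj_def)
          ultimately show ?thesis by (simp add: P1_def)
        next
          case False
          then have iI: "i \<in> I" by (simp add: I_def)
          then have "proj p i = 0" using i by (simp add: proj_def)
          then have "(\<Prod>l\<in>I. proj p l) = 0" using iI finI by (metis prod_zero_iff)
          then show ?thesis by (simp add: P1_def)
        qed
        then show ?thesis using psp[of p] x by blast
      qed
    qed
  qed
  have pe: "(\<lambda>p. restrict (\<lambda>i. p$i) (UNIV - {k0})) = proj" by (rule ext) (simp add: proj_def I_def)
  show "\<exists>Z\<in>null_sets (PiM (UNIV - {k0}) (\<lambda>_. lborel)).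
      (\<lambda>p. restrict (\<lambda>i. p$i) (UNIV - {k0})) ` {p \<in> prob_simplex. Lsame M D loss A N p = Lstar M D loss A N p} \<subseteq> Z"
    using key unfolding pe I_def .
qed

end

theorem theoremB3:
  fixes M :: "'z measure" and D :: "'k::finite \<Rightarrow> 'z measure"
    and loss :: "'h \<Rightarrow> 'z \<Rightarrow> real" and A :: "(nat \<Rightarrow> 'z) \<Rightarrow> 'h" and N :: nat
  assumes "CARD('k) \<ge> 2"
    and "N \<ge> 1"
    and "\<forall>k. prob_space (D k)"
    and "\<forall>k. sets (D k) = sets M"
    and "\<forall>r\<in>prob_simplex. \<forall>k. integrable (PiM {..<N} (\<lambda>_. mixture M D r) \<Otimes>\<^sub>M D k)
                                  (\<lambda>(S, z). loss (A S) z)"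
  shows "simplex_null {p \<in> prob_simplex. Lsame M D loss A N p = Lstar M D loss A N p}
       \<or> (\<forall>p \<in> orthant_nz. (Lsame M D loss A N has_derivative
              (\<lambda>h. \<Sum>k\<in>UNIV. ferr M D loss A N p k * h$k)) (at p within orthant_nz))"
proof -
  define c where "c = coef D loss A N"
  have E: "\<forall>r\<in>prob_simplex. \<forall>k. exp_err M D loss A N r k = Qf c N k r"
    using exp_err_poly[OF assms(3) assms(4) assms(5)] by (simp add: Qf_def c_def mult.commute)
  show ?thesis
  proof (cases "\<forall>p\<in>orthant_nz. \<forall>j. Hf c N j p = 0")
    case True
    then show ?thesis using right_case[OF assms(2) E True] by blast
  next
    case False
    then obtain p0 j where "p0 \<in> orthant_nz" "Hf c N j p0 \<noteq> 0" by blast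
    then show ?thesis using left_case[OF assms(2) E] by blast
  qed
qed

end
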